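(* Let $(|B(\lambda)\rangle,\mathcal{M})$ be an $N$-regular quantum scenario with $M_3=\{C_0,C_1\}$. It is a paradox if and only if $\delta(\lambda,C_0)$ and $\delta(\lambda,C_1)$ are each congruent modulo $2\pi$ to an even multiple of $\frac{\pi}{N}$ and $\beta(\lambda,C_0)-\beta(\lambda,C_1)$ is congruent modulo $2\pi$ to an odd multiple of $\frac{\pi}{N}$.
   Context: $\equiv$ is equality modulo $2\pi$; $\oplus$ is addition mod 2. For $\varphi\in\mathbb{R}$, $E_\varphi=\cos\varphi X+\sin\varphi Y$, with $+1$ eigenvector $|\varphi\rangle=\frac{1}{\sqrt2}(|0\rangle+e^{i\varphi}|1\rangle)$ and $-1$ eigenvector $|\varphi+\pi\rangle$; outcomes $+1,-1$ relabelled $0,1$; measurements identified with angles. A measurement scenario $\mathcal{M}=(M_1,M_2,M_3)$ consists of finite sets $M_i\subseteq[0,\pi)$ of angles for qubit $i$; contexts are triples in $M_1\times M_2\times M_3$. For a three-qubit state $|\psi\rangle$, the event $(A,B,C)\to(a,b,c)$ is impossible if $(\langle A+a\pi|\otimes\langle B+b\pi|\otimes\langle C+c\pi|)|\psi\rangle=0$; $(|\psi\rangle,\mathcal{M})$ is a paradox if for every assignment $g$ of outcomes in $\{0,1\}$ to all measurements of $M_1,M_2,M_3$ (as disjoint sets) some context $(A,B,C)$ has $(A,B,C)\to(g(A),g(B),g(C))$ impossible. For $\lambda\in[0,\frac{\pi}{2})$, $|v_\lambda\rangle=\cos\frac{\lambda}{2}|0\rangle+\sin\frac{\lambda}{2}|1\rangle$,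 $|w_\lambda\rangle=\sin\frac{\lambda}{2}|0\rangle+\cos\frac{\lambda}{2}|1\rangle$, $|B(\lambda)\rangle=\frac{1}{\sqrt2}(|00\rangle|v_\lambda\rangle+|11\rangle|w_\lambda\rangle)$. Define modulo $2\pi$: $\beta(\lambda,\varphi)=\varphi-2\arctan\left(\frac{\cos\frac{\lambda}{2}\sin\varphi}{\sin\frac{\lambda}{2}+\cos\frac{\lambda}{2}\cos\varphi}\right)$ and $\delta(\lambda,\varphi)=\beta(\lambda,\varphi+\pi)-\beta(\lambda,\varphi)$. For $|B(\lambda)\rangle$, $(A,B,C)\to(a,b,c)$ is impossible iff $A+B\equiv\beta(\lambda,C+c\pi)+(1\oplus a\oplus b)\pi$. $(|B(\lambda)\rangle,\mathcal{M})$ is maximally impossible if for every $C\in M_3$ and $z\in\{0,1\}$: every $A\in M_1$ admits $B\in M_2$, $a,b$ with $(A,B,C)\to(a,b,z)$ impossible, and every $B\in M_2$ admits $A\in M_1$, $a,b$ with $(A,B,C)\to(a,b,z)$ impossible. Then $|M_1|=|M_2|=:N$; write $M_1=\{A_0,\dots,A_{N-1}\}$, $M_2=\{B_0,\dots,B_{N-1}\}$, $M_3=\{C_0,\dots,C_{n-1}\}$; for each $(j,l,z)$ there is a unique $k=:K(j,l,z)$ with $A_j+B_k-\beta(\lambda,C_l+z\pi)$ an integer multiple of $\pi$, and $r(j,l,z)\in\{0,1\}$ is defined by $A_j+B_{K(j,l,z)}-\beta(\lambda,C_l+z\pi)\equiv r(j,l,z)\pi$. $\Psi_l(z)$ is the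 $\mathbb{Z}_2$-linear system $\{a_j\oplus b_{K(j,l,z)}=r(j,l,z):j=0,\dots,N-1\}$. With $n=2$, maximal rank means for all $z_0,z_1$ the coefficient matrix of $\Psi_0(z_0)\cup\Psi_1(z_1)$ has rank $2N-1$ over $\mathbb{Z}_2$. $N$-regular: maximally impossible and of maximal rank, with $|M_1|=|M_2|=N$ and $M_3=\{C_0,C_1\}$. *)

theory Defs
  imports Complex_Main "HOL-Library.Z2" "Jordan_Normal_Form.DL_Rank"
begin

definition cong2pi :: "real \<Rightarrow> real \<Rightarrow> bool" where
  "cong2pi x y \<longleftrightarrow> (\<exists>k::int. x - y = 2 * pi * of_int k)"

text \<open>Component x of the +1 eigenvector of cos(phi) X + sin(phi) Y
  in the computational basis (False = ket 0, True = ket 1).\<close>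
definition ket :: "real \<Rightarrow> bool \<Rightarrow> complex" where
  "ket phi x = (if x then cis phi else 1) / complex_of_real (sqrt 2)"

type_synonym state3 = "bool \<Rightarrow> bool \<Rightarrow> bool \<Rightarrow> complex"

definition amp3 :: "state3 \<Rightarrow> real \<Rightarrow> real \<Rightarrow> real \<Rightarrow> complex" where
  "amp3 psi al be ga =
     (\<Sum>x\<in>UNIV. \<Sum>y\<in>UNIV. \<Sum>z\<in>UNIV.
        cnj (ket al x) * cnj (ket be y) * cnj (ket ga z) * psi x y z)"

text \<open>Outcome bit a (False = outcome 0 = +1, True = outcome 1 = -1).\<close>
definition outc :: "real \<Rightarrow> bool \<Rightarrow> real" where
  "outc A a = A + of_bool a * pi"

definition impossible :: "state3 \<Rightarrow> real \<Rightarrow> real \<Rightarrow> real \<Rightarrow> bool \<Rightarrow> bool \<Rightarrow> bool \<Rightarrow> bool" where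
  "impossible psi A B C a b c \<longleftrightarrow> amp3 psi (outc A a) (outc B b) (outc C c) = 0"

definition meas_scenario :: "real set \<Rightarrow> real set \<Rightarrow> real set \<Rightarrow> bool" where
  "meas_scenario M1 M2 M3 \<longleftrightarrow>
     finite M1 \<and> finite M2 \<and> finite M3 \<and>
     M1 \<subseteq> {0..<pi} \<and> M2 \<subseteq> {0..<pi} \<and> M3 \<subseteq> {0..<pi}"

text \<open>Outcome assignments to the (disjoint) measurement sets are given by one
  function per qubit.\<close>
definition paradox :: "state3 \<Rightarrow> real set \<Rightarrow> real set \<Rightarrow> real set \<Rightarrow> bool" where
  "paradox psi M1 M2 M3 \<longleftrightarrow>
     (\<forall>g1 g2 g3 :: real \<Rightarrow> bool. \<exists>A\<in>M1. \<exists>B\<in>M2. \<exists>C\<in>M3.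
        impossible psi A B C (g1 A) (g2 B) (g3 C))"

definition vlam :: "real \<Rightarrow> bool \<Rightarrow> complex" where
  "vlam lam z = complex_of_real (if z then sin (lam/2) else cos (lam/2))"

definition wlam :: "real \<Rightarrow> bool \<Rightarrow> complex" where
  "wlam lam z = complex_of_real (if z then cos (lam/2) else sin (lam/2))"

definition Bstate :: "real \<Rightarrow> state3" where
  "Bstate lam x y z =
     (if x \<noteq> y then 0
      else if x then wlam lam z / complex_of_real (sqrt 2)
      else vlam lam z / complex_of_real (sqrt 2))"

text \<open>beta(lambda,phi) modulo 2 pi; when the denominator vanishes the arctan
  term is arctan(+-infinity) = +-pi/2, so 2 arctan = pi modulo 2 pi.\<close>
definition beta :: "real \<Rightarrow> real \<Rightarrow> real" where
  "beta lam phi =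
     (let d = sin (lam/2) + cos (lam/2) * cos phi in
      if d = 0 then phi - pi
      else phi - 2 * arctan (cos (lam/2) * sin phi / d))"

definition delta :: "real \<Rightarrow> real \<Rightarrow> real" where
  "delta lam phi = beta lam (phi + pi) - beta lam phi"

definition max_impossible :: "state3 \<Rightarrow> real set \<Rightarrow> real set \<Rightarrow> real set \<Rightarrow> bool" where
  "max_impossible psi M1 M2 M3 \<longleftrightarrow>
     (\<forall>C\<in>M3. \<forall>z. (\<forall>A\<in>M1. \<exists>B\<in>M2. \<exists>a b. impossible psi A B C a b z) \<and>
                  (\<forall>B\<in>M2. \<exists>A\<in>M1. \<exists>a b. impossible psi A B C a b z))"

definition Cidx :: "real \<Rightarrow> real \<Rightarrow> nat \<Rightarrow> real" where
  "Cidx C0 C1 l = (if l = 0 then C0 else C1)"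

definition Kidx :: "real \<Rightarrow> nat \<Rightarrow> (nat \<Rightarrow> real) \<Rightarrow> (nat \<Rightarrow> real) \<Rightarrow> real \<Rightarrow> real
                    \<Rightarrow> nat \<Rightarrow> nat \<Rightarrow> bool \<Rightarrow> nat" where
  "Kidx lam N A B C0 C1 j l z =
     (THE k. k < N \<and> (\<exists>m::int. A j + B k - beta lam (outc (Cidx C0 C1 l) z) = of_int m * pi))"

text \<open>Coefficient matrix over Z2 of Psi_0(z0) union Psi_1(z1): rows are the 2N
  equations (first those of Psi_0, then those of Psi_1), columns the variables
  a_0..a_{N-1}, b_0..b_{N-1}.\<close>
definition coeff_mat :: "real \<Rightarrow> nat \<Rightarrow> (nat \<Rightarrow> real) \<Rightarrow> (nat \<Rightarrow> real) \<Rightarrow> real \<Rightarrow> real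
                          \<Rightarrow> bool \<Rightarrow> bool \<Rightarrow> bit mat" where
  "coeff_mat lam N A B C0 C1 z0 z1 =
     mat (2*N) (2*N) (\<lambda>(i, c).
       let l = (if i < N then 0 else 1 :: nat);
           j = (if i < N then i else i - N);
           z = (if l = 0 then z0 else z1)
       in if c = j \<or> c = N + Kidx lam N A B C0 C1 j l z then 1 else 0)"

definition max_rank :: "real \<Rightarrow> nat \<Rightarrow> (nat \<Rightarrow> real) \<Rightarrow> (nat \<Rightarrow> real) \<Rightarrow> real \<Rightarrow> real \<Rightarrow> bool" where
  "max_rank lam N A B C0 C1 \<longleftrightarrow>
     (\<forall>z0 z1. vec_space.rank (2*N) (coeff_mat lam N A B C0 C1 z0 z1) = 2*N - 1)"

definition N_regular :: "real \<Rightarrow> nat \<Rightarrow> (nat \<Rightarrow> real) \<Rightarrow> (nat \<Rightarrow> real) \<Rightarrow> real \<Rightarrow> real \<Rightarrow> bool" where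
  "N_regular lam N A B C0 C1 \<longleftrightarrow>
     0 \<le> lam \<and> lam < pi/2 \<and> 1 \<le> N \<and>
     inj_on A {..<N} \<and> inj_on B {..<N} \<and> C0 \<noteq> C1 \<and>
     meas_scenario (A ` {..<N}) (B ` {..<N}) {C0, C1} \<and>
     max_impossible (Bstate lam) (A ` {..<N}) (B ` {..<N}) {C0, C1} \<and>
     max_rank lam N A B C0 C1"

end

theory Submission
  imports Defs
begin



lemma (in vec_space) solvable_of_rank:
  assumes M: "M \<in> carrier_mat n nc" and rk: "rank M = n - 1" and n: "n \<ge> 1"
  and colsum: "\<And>c. c < nc \<Longrightarrow> (\<Sum>i<n. M $$ (i,c)) = 0"
  and r: "r \<in> carrier_vec n" and rsum: "(\<Sum>i<n. r $ i) = 0"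
  shows "\<exists>x \<in> carrier_vec nc. M *\<^sub>v x = r"
proof (rule ccontr)
  assume nex: "\<not> ?thesis"
  define H :: "'a vec set" where "H = {v \<in> carrier_vec n. (\<Sum>i<n. v $ i) = 0}"
  have colsH: "set (cols M) \<subseteq> H"
  proof
    fix v assume "v \<in> set (cols M)"
    then obtain c where c: "c < nc" "v = col M c" using M by (auto simp: cols_def)
    then show "v \<in> H" using M colsum[OF c(1)] by (auto simp: H_def)
  qed
  have spanH: "span T \<subseteq> H" if T: "T \<subseteq> H" for T
  proof
    fix v assume "v \<in> span T"
    then obtain a U where U: "v = lincomb a U" "finite U" "U \<subseteq> T" unfolding span_def by auto
    have Uc: "U \<subseteq> carrier_vec n" using U T by (auto simp: H_def)
    have "(\<Sum>i<n. v $ i) = (\<Sum>i<n. \<Sum>u\<in>U. a u * u $ i)"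
      using lincomb_index[OF _ Uc] U by simp
    also have "\<dots> = (\<Sum>u\<in>U. a u * (\<Sum>i<n. u $ i))"
      by (subst sum.swap) (simp add: sum_distrib_left)
    also have "\<dots> = 0" using U T by (auto simp: H_def intro!: sum.neutral)
    finally show "v \<in> H" using lincomb_closed[OF Uc] U by (auto simp: H_def)
  qed
  have "r \<notin> span (set (cols M))"
  proof
    assume "r \<in> span (set (cols M))"
    then have "r \<in> col_space M" by (simp add: col_space_def)
    then show False using nex col_space_eq[OF M] M by auto
  qed
  obtain S where S: "finite S" "maximal S (\<lambda>T. T \<subseteq> set (cols M) \<and> lin_indpt T)"
  proof -
    have "\<exists>A. finite A \<and> maximal A (\<lambda>T. T \<subseteq> set (cols M) \<and> lin_indpt T) \<and> {} \<subseteq> A"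
      by (rule maximal_exists_superset[of "set (cols M)"]) (auto simp: lin_dep_def)
    then show ?thesis using that by blast
  qed
  have cardS: "card S = n - 1" using rank_card_indpt[OF M S(2)] rk by simp
  have SM: "S \<subseteq> set (cols M)" "lin_indpt S" using S(2) unfolding maximal_def by auto
  have Sc: "S \<subseteq> carrier_vec n" using SM colsH by (auto simp: H_def)
  have rS: "r \<notin> span S" using span_is_monotone[OF SM(1)] \<open>r \<notin> span (set (cols M))\<close> by auto
  have rS2: "r \<notin> S" using rS in_own_span[OF Sc] by auto
  have li: "lin_indpt (S \<union> {r})" using lin_dep_iff_in_span[OF Sc SM(2) r rS2] rS by simp
  have card: "card (S \<union> {r}) = n" using cardS rS2 S(1) n by simp
  have "basis (S \<union> {r})"
    by (rule dim_li_is_basis) (use S(1) Sc r li card dim_is_n in auto)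
  then have "span (S \<union> {r}) = carrier_vec n" unfolding basis_def by simp
  moreover have "span (S \<union> {r}) \<subseteq> H"
    by (rule spanH) (use SM(1) colsH r rsum in \<open>auto simp: H_def\<close>)
  ultimately have "unit_vec n 0 \<in> H" using n by auto
  then show False using n by (simp add: H_def sum.remove[of _ 0])
qed



lemma amp3_B:
  "amp3 (Bstate lam) al be ga =
     ((complex_of_real (cos (lam/2)) + cis (-ga) * complex_of_real (sin (lam/2)))
      + cis (-(al+be)) * (complex_of_real (sin (lam/2)) + cis (-ga) * complex_of_real (cos (lam/2)))) / 4"
proof -
  define h where "h = complex_of_real (sqrt 2)"
  have s2: "h * h = 2" unfolding h_def of_real_mult[symmetric] by simp
  have ch: "cnj h = h" unfolding h_def by simp
  have k: "cnj (ket p x) = (if x then cis (-p) else 1) / h" for p x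
    unfolding ket_def h_def[symmetric] by (simp add: ch cis_cnj)
  have e: "cis (-(al+be)) = cis (-al) * cis (-be)" by (simp add: cis_mult)
  have h4: "h*h*h*h = 4"
  proof -
    have "h*h*h*h = (h*h)*(h*h)" by (simp add: ac_simps)
    then show ?thesis by (simp add: s2)
  qed
  have eq: "amp3 (Bstate lam) al be ga =
     (complex_of_real (cos (lam/2)) + cis (-ga) * complex_of_real (sin (lam/2))) / (h*h*h*h)
      + cis (-al) * cis (-be) * (complex_of_real (sin (lam/2)) + cis (-ga) * complex_of_real (cos (lam/2))) / (h*h*h*h)"
    unfolding amp3_def UNIV_bool k Bstate_def vlam_def wlam_def h_def[symmetric]
    by (simp add: field_simps add_divide_distrib)
  show ?thesis unfolding eq h4 e by (simp add: add_divide_distrib)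
qed

lemma cis_eq_iff: "cis x = cis y \<longleftrightarrow> (\<exists>k::int. x - y = of_int k * 2 * pi)"
proof -
  have "cis x = cis y \<longleftrightarrow> cis (x - y) = 1"
    by (metis cis_divide cis_neq_zero divide_self_if eq_divide_eq)
  also have "\<dots> \<longleftrightarrow> cos (x - y) = 1"
  proof
    assume "cos (x - y) = 1"
    moreover have "sin (x-y)^2 + cos (x-y)^2 = 1" by simp
    ultimately have "sin (x - y) = 0" by simp
    with \<open>cos (x - y) = 1\<close> show "cis (x - y) = 1" by (simp add: complex_eq_iff)
  qed (simp add: complex_eq_iff)
  also have "\<dots> \<longleftrightarrow> (\<exists>k::int. x - y = of_int k * 2 * pi)" by (rule cos_one_2pi_int)
  finally show ?thesis .
qed




lemma sc_facts:
  assumes "0 \<le> lam" "lam < pi/2"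
  shows "cos (lam/2) > 0" "sin (lam/2) \<ge> 0" "sin (lam/2) < cos (lam/2)"
proof -
  show "cos (lam/2) > 0" using assms by (intro cos_gt_zero_pi) auto
  show "sin (lam/2) \<ge> 0" using assms by (intro sin_ge_zero) auto
  have "cos (lam/2 + pi/4) > 0" using assms by (intro cos_gt_zero_pi) auto
  then have "cos (lam/2) * (sqrt 2 / 2) - sin (lam/2) * (sqrt 2 / 2) > 0"
    by (simp add: cos_add cos_45 sin_45)
  then show "sin (lam/2) < cos (lam/2)"
    by (simp add: left_diff_distrib[symmetric])
qed

lemma W_polar:
  assumes "0 \<le> lam" "lam < pi/2"
  shows "\<exists>\<rho> \<phi>. \<rho> \<noteq> 0 \<and>
     complex_of_real (sin (lam/2)) + complex_of_real (cos (lam/2)) * cis g = complex_of_real \<rho> * cis \<phi> \<and>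
     beta lam g = g - 2 * \<phi>"
proof -
  let ?c = "cos (lam/2)" and ?s = "sin (lam/2)"
  note sc = sc_facts[OF assms]
  define d where "d = ?s + ?c * cos g"
  show ?thesis
  proof (cases "d = 0")
    case True
    have "sin g \<noteq> 0"
    proof
      assume "sin g = 0"
      then have "cos g = 1 \<or> cos g = -1" using sin_cos_squared_add[of g]
        by (metis add.left_neutral power2_eq_1_iff power_zero_numeral zero_neq_numeral)
      then show False using True sc unfolding d_def by auto
    qed
    then have "?c * sin g \<noteq> 0" using sc by simp
    moreover have "complex_of_real ?s + complex_of_real ?c * cis g = complex_of_real (?c * sin g) * cis (pi/2)"
      using True by (simp add: complex_eq_iff d_def)
    moreover have "beta lam g = g - 2 * (pi/2)" using True by (simp add: beta_def d_def Let_def)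
    ultimately show ?thesis by blast
  next
    case False
    define \<phi> where "\<phi> = arctan (?c * sin g / d)"
    have cp: "cos \<phi> \<noteq> 0" unfolding \<phi>_def by (rule cos_arctan_not_zero)
    have tp: "sin \<phi> / cos \<phi> = ?c * sin g / d" unfolding \<phi>_def by (metis tan_arctan tan_def)
    have "complex_of_real ?s + complex_of_real ?c * cis g = complex_of_real (d / cos \<phi>) * cis \<phi>"
      using cp tp False by (simp add: complex_eq_iff d_def field_simps)
    moreover have "d / cos \<phi> \<noteq> 0" using cp False by simp
    moreover have "beta lam g = g - 2 * \<phi>" using False by (simp add: beta_def d_def Let_def \<phi>_def)
    ultimately show ?thesis by blast
  qed
qed




lemma imp_char0:
  assumes "0 \<le> lam" "lam < pi/2"
  shows "impossible (Bstate lam) A B C a b z \<longleftrightarrow>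
    (\<exists>k::int. A + B + (of_bool a + of_bool b) * pi - beta lam (outc C z) + pi = of_int k * 2 * pi)"
proof -
  define g where "g = outc C z"
  define \<theta> where "\<theta> = outc A a + outc B b"
  obtain \<rho> \<phi> where rp: "\<rho> \<noteq> 0"
    "complex_of_real (sin (lam/2)) + complex_of_real (cos (lam/2)) * cis g = complex_of_real \<rho> * cis \<phi>"
    "beta lam g = g - 2 * \<phi>"
    using W_polar[OF assms, of g] by blast
  let ?c = "complex_of_real (cos (lam/2))" and ?s = "complex_of_real (sin (lam/2))"
  have e1: "?c + cis (-g) * ?s = complex_of_real \<rho> * cis (\<phi> - g)"
  proof -
    have "?c + cis (-g) * ?s = cis (-g) * (?s + ?c * cis g)"
      by (simp add: algebra_simps cis_mult)
    also have "\<dots> = complex_of_real \<rho> * cis (\<phi> - g)" using rp(2) by (simp add: cis_mult algebra_simps)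
    finally show ?thesis .
  qed
  have e2: "?s + cis (-g) * ?c = complex_of_real \<rho> * cis (- \<phi>)"
  proof -
    have "?s + cis (-g) * ?c = cnj (?s + ?c * cis g)" by (simp add: cis_cnj mult.commute)
    also have "\<dots> = complex_of_real \<rho> * cis (- \<phi>)" using rp(2) by (simp add: cis_cnj)
    finally show ?thesis .
  qed
  have "impossible (Bstate lam) A B C a b z \<longleftrightarrow>
      complex_of_real \<rho> * (cis (\<phi> - g) + cis (- \<phi> - \<theta>)) = 0"
    unfolding impossible_def amp3_B g_def[symmetric] \<theta>_def[symmetric] e1 e2
    by (simp add: cis_mult algebra_simps)
  also have "\<dots> \<longleftrightarrow> cis (\<phi> - g) = cis (- \<phi> - \<theta> - pi)"
  proof -
    have "complex_of_real \<rho> * (cis (\<phi> - g) + cis (- \<phi> - \<theta>)) = 0 \<longleftrightarrow> cis (\<phi> - g) + cis (- \<phi> - \<theta>) = 0"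
      using rp(1) by simp
    also have "\<dots> \<longleftrightarrow> cis (\<phi> - g) = - cis (- \<phi> - \<theta>)" by (rule eq_neg_iff_add_eq_0[symmetric])
    also have "\<dots> \<longleftrightarrow> cis (\<phi> - g) = cis (- \<phi> - \<theta> - pi)" by (simp only: minus_cis')
    finally show ?thesis .
  qed
  also have "\<dots> \<longleftrightarrow> (\<exists>k::int. (\<phi> - g) - (- \<phi> - \<theta> - pi) = of_int k * 2 * pi)"
    by (rule cis_eq_iff)
  also have "\<dots> \<longleftrightarrow> (\<exists>k::int. A + B + (of_bool a + of_bool b) * pi - beta lam (outc C z) + pi = of_int k * 2 * pi)"
  proof -
    have e1: "(\<phi> - g) - (- \<phi> - \<theta> - pi) = \<theta> - beta lam g + pi" using rp(3) by simp
    have e2: "\<theta> - beta lam g + pi = A + B + (of_bool a + of_bool b) * pi - beta lam (outc C z) + pi"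
      by (simp add: \<theta>_def g_def outc_def algebra_simps)
    show ?thesis unfolding e1 e2 ..
  qed
  finally show ?thesis .
qed

lemma imp_char:
  assumes "0 \<le> lam" "lam < pi/2"
  shows "impossible (Bstate lam) A B C a b z \<longleftrightarrow>
    (\<exists>m::int. A + B - beta lam (outc C z) = of_int m * pi \<and> (odd m \<longleftrightarrow> a = b))"
  unfolding imp_char0[OF assms]
proof
  assume "\<exists>k::int. A + B + (of_bool a + of_bool b) * pi - beta lam (outc C z) + pi = of_int k * 2 * pi"
  then obtain k :: int where k: "A + B + (of_bool a + of_bool b) * pi - beta lam (outc C z) + pi = of_int k * 2 * pi" by blast
  define m where "m = 2*k - 1 - of_bool a - of_bool b"
  have "A + B - beta lam (outc C z) = of_int m * pi" using k unfolding m_def by (simp add: algebra_simps)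
  moreover have "odd m \<longleftrightarrow> a = b" unfolding m_def by (cases a; cases b) auto
  ultimately show "\<exists>m::int. A + B - beta lam (outc C z) = of_int m * pi \<and> (odd m \<longleftrightarrow> a = b)" by blast
next
  assume "\<exists>m::int. A + B - beta lam (outc C z) = of_int m * pi \<and> (odd m \<longleftrightarrow> a = b)"
  then obtain m :: int where m: "A + B - beta lam (outc C z) = of_int m * pi" "odd m \<longleftrightarrow> a = b" by blast
  have "even (m + 1 + of_bool a + of_bool b)" using m(2) by (cases a; cases b) auto
  then obtain k where k: "m + 1 + of_bool a + of_bool b = 2 * k" by blast
  have "A + B + (of_bool a + of_bool b) * pi - beta lam (outc C z) + pi = of_int (m + 1 + of_bool a + of_bool b) * pi"
    using m(1) by (simp add: algebra_simps)
  also have "\<dots> = of_int k * 2 * pi" unfolding k by simp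
  finally show "\<exists>k::int. A + B + (of_bool a + of_bool b) * pi - beta lam (outc C z) + pi = of_int k * 2 * pi" by blast
qed




definition bt :: "real \<Rightarrow> real \<Rightarrow> real \<Rightarrow> nat \<Rightarrow> bool \<Rightarrow> real" where
  "bt lam C0 C1 l z = beta lam (outc (Cidx C0 C1 l) z)"

definition mm :: "real \<Rightarrow> nat \<Rightarrow> (nat \<Rightarrow> real) \<Rightarrow> (nat \<Rightarrow> real) \<Rightarrow> real \<Rightarrow> real \<Rightarrow> nat \<Rightarrow> bool \<Rightarrow> nat \<Rightarrow> int" where
  "mm lam N A B C0 C1 l z j = \<lfloor>(A j + B (Kidx lam N A B C0 C1 j l z) - bt lam C0 C1 l z) / pi\<rfloor>"

lemma piZ_eq:
  fixes x y :: real and m :: int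
  assumes "x \<in> {0..<pi}" "y \<in> {0..<pi}" "x - y = of_int m * pi"
  shows "x = y"
proof -
  have "m = 0"
  proof (rule ccontr)
    assume "m \<noteq> 0"
    then have "m \<ge> 1 \<or> m \<le> -1" by linarith
    then have "of_int m * pi \<ge> pi \<or> of_int m * pi \<le> - pi"
    proof
      assume "m \<ge> 1" then have "real_of_int m \<ge> 1" by simp
      then have "real_of_int m * pi \<ge> 1 * pi" using pi_gt_zero by (intro mult_right_mono) auto
      then show ?thesis by simp
    next
      assume "m \<le> -1" then have "real_of_int m \<le> -1" by simp
      then have "real_of_int m * pi \<le> -1 * pi" using pi_gt_zero by (intro mult_right_mono) auto
      then show ?thesis by simp
    qed
    then show False using assms by (smt (verit) atLeastLessThan_iff)
  qed
  then show ?thesis using assms by simp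
qed

context
  fixes lam N A B C0 C1
  assumes reg: "N_regular lam N A B C0 C1"
begin

lemma reg_lam: "0 \<le> lam" "lam < pi/2" using reg unfolding N_regular_def by auto
lemma reg_N: "1 \<le> N" using reg unfolding N_regular_def by auto
lemma reg_inj: "inj_on A {..<N}" "inj_on B {..<N}" using reg unfolding N_regular_def by auto
lemma reg_C: "C0 \<noteq> C1" using reg unfolding N_regular_def by auto
lemma reg_A: "j < N \<Longrightarrow> A j \<in> {0..<pi}" using reg unfolding N_regular_def meas_scenario_def by auto
lemma reg_B: "j < N \<Longrightarrow> B j \<in> {0..<pi}" using reg unfolding N_regular_def meas_scenario_def by auto
lemma reg_mi: "max_impossible (Bstate lam) (A ` {..<N}) (B ` {..<N}) {C0, C1}"
  using reg unfolding N_regular_def by auto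
lemma reg_rank: "max_rank lam N A B C0 C1" using reg unfolding N_regular_def by auto

lemma K_ex: "j < N \<Longrightarrow> \<exists>k<N. \<exists>m::int. A j + B k - bt lam C0 C1 l z = of_int m * pi"
proof -
  assume j: "j < N"
  have C: "Cidx C0 C1 l \<in> {C0, C1}" by (simp add: Cidx_def)
  obtain B' a b where "B' \<in> B ` {..<N}" "impossible (Bstate lam) (A j) B' (Cidx C0 C1 l) a b z"
    using reg_mi C j unfolding max_impossible_def by blast
  then show ?thesis unfolding imp_char[OF reg_lam] bt_def by blast
qed

lemma K_uniq:
  assumes "k < N" "k' < N" "A j + B k - bt lam C0 C1 l z = of_int m * pi"
    "A j + B k' - bt lam C0 C1 l z = of_int m' * pi"
  shows "k = k'"
proof -
  have "B k - B k' = of_int (m - m') * pi" using assms(3,4) by (simp add: algebra_simps)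
  then have "B k = B k'" using piZ_eq reg_B assms(1,2) by blast
  then show ?thesis using reg_inj(2) assms(1,2) by (auto dest: inj_onD)
qed

lemma K_prop:
  assumes "j < N"
  shows "Kidx lam N A B C0 C1 j l z < N \<and>
    (\<exists>m::int. A j + B (Kidx lam N A B C0 C1 j l z) - bt lam C0 C1 l z = of_int m * pi)"
proof -
  have "\<exists>!k. k < N \<and> (\<exists>m::int. A j + B k - beta lam (outc (Cidx C0 C1 l) z) = of_int m * pi)"
    using K_ex[OF assms, of l z] K_uniq unfolding bt_def by blast
  from theI'[OF this] show ?thesis unfolding Kidx_def bt_def .
qed

lemma K_eq:
  assumes "j < N" "k < N" "A j + B k - bt lam C0 C1 l z = of_int m * pi"
  shows "Kidx lam N A B C0 C1 j l z = k"
  using K_prop[OF assms(1), of l z] K_uniq assms by blast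

lemma K_bij: "bij_betw (\<lambda>j. Kidx lam N A B C0 C1 j l z) {..<N} {..<N}"
proof -
  have inj: "inj_on (\<lambda>j. Kidx lam N A B C0 C1 j l z) {..<N}"
  proof (rule inj_onI)
    fix j j' assume j: "j \<in> {..<N}" "j' \<in> {..<N}"
      and e: "Kidx lam N A B C0 C1 j l z = Kidx lam N A B C0 C1 j' l z"
    obtain m where m: "A j + B (Kidx lam N A B C0 C1 j l z) - bt lam C0 C1 l z = of_int m * pi"
      using K_prop j by blast
    obtain m' where m': "A j' + B (Kidx lam N A B C0 C1 j' l z) - bt lam C0 C1 l z = of_int m' * pi"
      using K_prop j by blast
    have "A j - A j' = of_int (m - m') * pi" using m m' e by (simp add: algebra_simps)
    then have "A j = A j'" using piZ_eq reg_A j by blast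
    then show "j = j'" using reg_inj(1) j by (auto dest: inj_onD)
  qed
  moreover have "(\<lambda>j. Kidx lam N A B C0 C1 j l z) ` {..<N} \<subseteq> {..<N}" using K_prop by auto
  ultimately have "(\<lambda>j. Kidx lam N A B C0 C1 j l z) ` {..<N} = {..<N}"
    using endo_inj_surj by blast
  then show ?thesis using inj unfolding bij_betw_def by blast
qed

lemma mm_eq:
  assumes "j < N"
  shows "A j + B (Kidx lam N A B C0 C1 j l z) - bt lam C0 C1 l z = of_int (mm lam N A B C0 C1 l z j) * pi"
proof -
  obtain m :: int where m: "A j + B (Kidx lam N A B C0 C1 j l z) - bt lam C0 C1 l z = of_int m * pi"
    using K_prop[OF assms] by blast
  then have "mm lam N A B C0 C1 l z j = m" unfolding mm_def m by simp
  then show ?thesis using m by simp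
qed

lemma mm_uniq:
  assumes "j < N" "A j + B (Kidx lam N A B C0 C1 j l z) - bt lam C0 C1 l z = of_int m * pi"
  shows "m = mm lam N A B C0 C1 l z j"
  using mm_eq[OF assms(1), of l z] assms(2) by simp

lemma sum_mm:
  "of_int (\<Sum>j<N. mm lam N A B C0 C1 l z j) * pi =
     (\<Sum>j<N. A j) + (\<Sum>k<N. B k) - of_nat N * bt lam C0 C1 l z"
proof -
  have "of_int (\<Sum>j<N. mm lam N A B C0 C1 l z j) * pi = (\<Sum>j<N. of_int (mm lam N A B C0 C1 l z j) * pi)"
    by (simp add: sum_distrib_right)
  also have "\<dots> = (\<Sum>j<N. A j + B (Kidx lam N A B C0 C1 j l z) - bt lam C0 C1 l z)"
    using mm_eq by simp
  also have "\<dots> = (\<Sum>j<N. A j) + (\<Sum>j<N. B (Kidx lam N A B C0 C1 j l z)) - of_nat N * bt lam C0 C1 l z"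
    by (simp add: sum.distrib sum_subtractf)
  also have "(\<Sum>j<N. B (Kidx lam N A B C0 C1 j l z)) = (\<Sum>k<N. B k)"
    using sum.reindex_bij_betw[OF K_bij] .
  finally show ?thesis .
qed

lemma S_eq:
  "of_int ((\<Sum>j<N. mm lam N A B C0 C1 0 z0 j) - (\<Sum>j<N. mm lam N A B C0 C1 1 z1 j)) * pi =
     of_nat N * (bt lam C0 C1 1 z1 - bt lam C0 C1 0 z0)"
  using sum_mm[of 0 z0] sum_mm[of 1 z1] by (simp add: algebra_simps)

end



lemma of_int_bit: "(of_int m :: bit) = (if odd m then 1 else 0)"
proof -
  have m: "m = 2 * (m div 2) + m mod 2" by simp
  have "(of_int m :: bit) = 2 * of_int (m div 2) + of_int (m mod 2)"
    by (subst m) (simp only: of_int_add of_int_mult of_int_numeral)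
  also have "\<dots> = of_int (m mod 2)" by simp
  also have "\<dots> = (if odd m then 1 else 0)"
    by (cases "odd m") (simp_all add: odd_iff_mod_2_eq_one even_iff_mod_2_eq_zero)
  finally show ?thesis .
qed

lemma sum_split_nat: "(\<Sum>i<m + n. f i) = (\<Sum>i<m. f i) + (\<Sum>j<n. f (m + j))" for f :: "nat \<Rightarrow> 'a::comm_monoid_add"
  by (induction n) (simp_all add: add.assoc)

lemma sum_two_points:
  fixes x :: "nat \<Rightarrow> 'a::comm_ring_1"
  assumes "p < n" "q < n" "p \<noteq> q"
  shows "(\<Sum>c<n. (if c = p \<or> c = q then 1 else 0) * x c) = x p + x q"
proof -
  have "(\<Sum>c<n. (if c = p \<or> c = q then 1 else 0) * x c) = (\<Sum>c<n. (if c = p then x c else 0) + (if c = q then x c else 0))"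
    by (rule sum.cong) (use assms in auto)
  also have "\<dots> = x p + x q" using assms by (simp add: sum.distrib)
  finally show ?thesis .
qed

context
  fixes lam N A B C0 C1
  assumes reg: "N_regular lam N A B C0 C1"
begin

lemma nonparadox_even:
  assumes "\<not> paradox (Bstate lam) (A ` {..<N}) (B ` {..<N}) {C0, C1}"
  shows "\<exists>z0 z1. even ((\<Sum>j<N. mm lam N A B C0 C1 0 z0 j) - (\<Sum>j<N. mm lam N A B C0 C1 1 z1 j))"
proof -
  obtain g1 g2 g3 where H: "\<And>j k C. j < N \<Longrightarrow> k < N \<Longrightarrow> C \<in> {C0, C1} \<Longrightarrow>
      \<not> impossible (Bstate lam) (A j) (B k) C (g1 (A j)) (g2 (B k)) (g3 C)"
    using assms unfolding paradox_def by blast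
  define z where "z l = g3 (Cidx C0 C1 l)" for l
  have par: "even (mm lam N A B C0 C1 l (z l) j - of_bool (g1 (A j)) - of_bool (g2 (B (Kidx lam N A B C0 C1 j l (z l)))))"
    if j: "j < N" for l j
  proof -
    let ?k = "Kidx lam N A B C0 C1 j l (z l)"
    have k: "?k < N" using K_prop[OF reg j] by blast
    have "Cidx C0 C1 l \<in> {C0, C1}" by (simp add: Cidx_def)
    then have ni: "\<not> impossible (Bstate lam) (A j) (B ?k) (Cidx C0 C1 l) (g1 (A j)) (g2 (B ?k)) (z l)"
      using H[OF j k] unfolding z_def by blast
    have "\<not> (odd (mm lam N A B C0 C1 l (z l) j) \<longleftrightarrow> g1 (A j) = g2 (B ?k))"
      using ni mm_eq[OF reg j, of l "z l"] unfolding imp_char[OF reg_lam[OF reg]] bt_def by blast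
    then show ?thesis by (cases "g1 (A j)"; cases "g2 (B ?k)") auto
  qed
  have sums: "even ((\<Sum>j<N. mm lam N A B C0 C1 l (z l) j) - (\<Sum>j<N. of_bool (g1 (A j))) - (\<Sum>k<N. of_bool (g2 (B k)) :: int))" for l
  proof -
    have "even (\<Sum>j<N. mm lam N A B C0 C1 l (z l) j - of_bool (g1 (A j)) - of_bool (g2 (B (Kidx lam N A B C0 C1 j l (z l)))) :: int)"
      using par by (intro dvd_sum) auto
    moreover have "(\<Sum>j<N. of_bool (g2 (B (Kidx lam N A B C0 C1 j l (z l)))) :: int) = (\<Sum>k<N. of_bool (g2 (B k)))"
      using sum.reindex_bij_betw[OF K_bij[OF reg], of "\<lambda>k. of_bool (g2 (B k)) :: int"] .
    ultimately show ?thesis by (simp add: sum_subtractf)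
  qed
  have "even ((\<Sum>j<N. mm lam N A B C0 C1 0 (z 0) j) - (\<Sum>j<N. mm lam N A B C0 C1 1 (z 1) j))"
    using dvd_diff[OF sums[of 0] sums[of 1]] by (simp add: algebra_simps)
  then show ?thesis by blast
qed

end



context
  fixes lam N A B C0 C1
  assumes reg: "N_regular lam N A B C0 C1"
begin

lemma even_nonparadox:
  assumes ev: "even ((\<Sum>j<N. mm lam N A B C0 C1 0 z0 j) - (\<Sum>j<N. mm lam N A B C0 C1 1 z1 j))"
  shows "\<not> paradox (Bstate lam) (A ` {..<N}) (B ` {..<N}) {C0, C1}"
proof -
  define M where "M = coeff_mat lam N A B C0 C1 z0 z1"
  define n where "n = 2 * N"
  define zz where "zz l = (if l = (0::nat) then z0 else z1)" for l
  define K where "K l j = Kidx lam N A B C0 C1 j l (zz l)" for l j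
  have N1: "N \<ge> 1" using reg_N[OF reg] .
  have Kl: "K l j < N" if "j < N" for l j using K_prop[OF reg that] unfolding K_def by blast
  have Mc: "M \<in> carrier_mat n n" unfolding M_def n_def coeff_mat_def by simp
  have M0: "M $$ (j, c) = (if c = j \<or> c = N + K 0 j then 1 else 0)" if "j < N" "c < n" for j c
    using that unfolding M_def n_def coeff_mat_def K_def zz_def by simp
  have M1: "M $$ (N + j, c) = (if c = j \<or> c = N + K 1 j then 1 else 0)" if "j < N" "c < n" for j c
    using that unfolding M_def n_def coeff_mat_def K_def zz_def by simp
  have half: "(\<Sum>j<N. (if c = j \<or> c = N + K l j then 1 else 0) :: bit) = 1" if c: "c < n" for c l
  proof (cases "c < N")
    case True
    have "(\<Sum>j<N. (if c = j \<or> c = N + K l j then 1 else 0) :: bit) = (\<Sum>j<N. if c = j then 1 else 0)"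
      by (rule sum.cong) (use True in auto)
    also have "\<dots> = 1" using True by simp
    finally show ?thesis .
  next
    case False
    then obtain k where k: "c = N + k" "k < N" using c unfolding n_def by (metis add_diff_inverse_nat add_less_cancel_left mult_2)
    have "(\<Sum>j<N. (if c = j \<or> c = N + K l j then 1 else 0) :: bit) = (\<Sum>j<N. (\<lambda>k'. if k = k' then 1 else 0) (K l j))"
      by (rule sum.cong) (use k in auto)
    also have "\<dots> = (\<Sum>k'<N. if k = k' then 1 else 0)"
      using sum.reindex_bij_betw[OF K_bij[OF reg, of l "zz l"]] unfolding K_def .
    also have "\<dots> = 1" using k by simp
    finally show ?thesis .
  qed
  have colsum: "(\<Sum>i<n. M $$ (i, c)) = 0" if c: "c < n" for c
  proof -
    have "(\<Sum>i<n. M $$ (i, c)) = (\<Sum>i<N. M $$ (i, c)) + (\<Sum>j<N. M $$ (N + j, c))"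
      unfolding n_def mult_2 by (rule sum_split_nat)
    also have "\<dots> = (\<Sum>j<N. (if c = j \<or> c = N + K 0 j then 1 else 0)) + (\<Sum>j<N. (if c = j \<or> c = N + K 1 j then 1 else 0))"
      using M0 M1 c by simp
    also have "\<dots> = 0" using half[OF c] by simp
    finally show ?thesis .
  qed
  define r :: "bit vec" where "r = vec n (\<lambda>i. if i < N then of_int (mm lam N A B C0 C1 0 z0 i) else of_int (mm lam N A B C0 C1 1 z1 (i - N)))"
  have rc: "r \<in> carrier_vec n" unfolding r_def by simp
  have rsum: "(\<Sum>i<n. r $ i) = 0"
  proof -
    have "(\<Sum>i<n. r $ i) = (\<Sum>i<N. r $ i) + (\<Sum>j<N. r $ (N + j))"
      unfolding n_def mult_2 by (rule sum_split_nat)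
    also have "\<dots> = of_int ((\<Sum>j<N. mm lam N A B C0 C1 0 z0 j) + (\<Sum>j<N. mm lam N A B C0 C1 1 z1 j))"
      unfolding r_def n_def by simp
    also have "\<dots> = 0"
    proof -
      have "even ((\<Sum>j<N. mm lam N A B C0 C1 0 z0 j) + (\<Sum>j<N. mm lam N A B C0 C1 1 z1 j))"
        using dvd_add[OF ev dvd_triv_left[of 2 "\<Sum>j<N. mm lam N A B C0 C1 1 z1 j"]] by (simp add: algebra_simps)
      then show ?thesis unfolding of_int_bit by simp
    qed
    finally show ?thesis .
  qed
  have rk: "vec_space.rank n M = n - 1" using reg_rank[OF reg] unfolding max_rank_def M_def n_def by blast
  obtain x where xc: "x \<in> carrier_vec n" and Mx: "M *\<^sub>v x = r"
    using vec_space.solvable_of_rank[OF Mc rk _ colsum rc rsum] N1 unfolding n_def by auto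
  have Mxi: "(M *\<^sub>v x) $ i = (\<Sum>c<n. M $$ (i, c) * x $ c)" if "i < n" for i
    using that Mc xc by (simp add: scalar_prod_def atLeast0LessThan)
  have E0: "x $ j + x $ (N + K 0 j) = of_int (mm lam N A B C0 C1 0 z0 j)" if j: "j < N" for j
  proof -
    have "r $ j = (\<Sum>c<n. M $$ (j, c) * x $ c)" using Mxi[of j] j Mx unfolding n_def by simp
    also have "\<dots> = (\<Sum>c<n. (if c = j \<or> c = N + K 0 j then 1 else 0) * x $ c)"
      by (rule sum.cong) (use M0 j in auto)
    also have "\<dots> = x $ j + x $ (N + K 0 j)"
      by (rule sum_two_points) (use j Kl[OF j] in \<open>auto simp: n_def\<close>)
    finally show ?thesis using j unfolding r_def n_def by simp
  qed
  have E1: "x $ j + x $ (N + K 1 j) = of_int (mm lam N A B C0 C1 1 z1 j)" if j: "j < N" for j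
  proof -
    have "r $ (N + j) = (\<Sum>c<n. M $$ (N + j, c) * x $ c)" using Mxi[of "N + j"] j Mx unfolding n_def by simp
    also have "\<dots> = (\<Sum>c<n. (if c = j \<or> c = N + K 1 j then 1 else 0) * x $ c)"
      by (rule sum.cong) (use M1 j in auto)
    also have "\<dots> = x $ j + x $ (N + K 1 j)"
      by (rule sum_two_points) (use j Kl[OF j] in \<open>auto simp: n_def\<close>)
    finally show ?thesis using j unfolding r_def n_def by simp
  qed
  have E: "x $ j + x $ (N + K l j) = of_int (mm lam N A B C0 C1 l (zz l) j)" if j: "j < N" "l \<le> 1" for j l
    using E0 E1 j unfolding zz_def by (cases l) auto
  define g1 where "g1 y = (\<exists>j<N. A j = y \<and> x $ j = 1)" for y
  define g2 where "g2 y = (\<exists>k<N. B k = y \<and> x $ (N + k) = 1)" for y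
  define g3 where "g3 y = (if y = C0 then z0 else z1)" for y
  have g1A: "g1 (A j) \<longleftrightarrow> x $ j = 1" if "j < N" for j
    using that reg_inj(1)[OF reg] unfolding g1_def by (auto dest: inj_onD)
  have g2B: "g2 (B k) \<longleftrightarrow> x $ (N + k) = 1" if "k < N" for k
    using that reg_inj(2)[OF reg] unfolding g2_def by (auto dest: inj_onD)
  have "\<not> impossible (Bstate lam) (A j) (B k) C (g1 (A j)) (g2 (B k)) (g3 C)"
    if j: "j < N" and k: "k < N" and C: "C \<in> {C0, C1}" for j k C
  proof
    assume imp: "impossible (Bstate lam) (A j) (B k) C (g1 (A j)) (g2 (B k)) (g3 C)"
    define l :: nat where "l = (if C = C0 then 0 else 1)"
    have l1: "l \<le> 1" unfolding l_def by simp
    have Cl: "Cidx C0 C1 l = C" and gl: "g3 C = zz l"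
      using C reg_C[OF reg] unfolding l_def Cidx_def g3_def zz_def by auto
    obtain m :: int where m: "A j + B k - beta lam (outc C (g3 C)) = of_int m * pi"
      and par: "odd m \<longleftrightarrow> g1 (A j) = g2 (B k)"
      using imp unfolding imp_char[OF reg_lam[OF reg]] by blast
    have m': "A j + B k - bt lam C0 C1 l (zz l) = of_int m * pi" using m unfolding bt_def Cl gl .
    have Kk: "K l j = k" using K_eq[OF reg j k m'] unfolding K_def .
    have mm: "m = mm lam N A B C0 C1 l (zz l) j"
      using mm_uniq[OF reg j, of l "zz l" m] m' Kk unfolding K_def by simp
    have "x $ j + x $ (N + k) = of_int m" using E[OF j l1] Kk mm by simp
    then show False using par g1A[OF j] g2B[OF k]
      by (cases "x $ j"; cases "x $ (N + k)") (auto simp: of_int_bit)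
  qed
  then show ?thesis unfolding paradox_def by blast
qed

end



lemma arith_final:
  fixes N :: nat and b0 b1 d0 d1 :: real and S :: "bool \<Rightarrow> bool \<Rightarrow> int"
  assumes N: "N \<ge> 1"
    and XS: "\<And>z0 z1. of_int (S z0 z1) * pi = real N * ((b1 + of_bool z1 * d1) - (b0 + of_bool z0 * d0))"
  shows "(\<forall>z0 z1. odd (S z0 z1)) \<longleftrightarrow>
    (\<exists>k::int. cong2pi d0 (of_int (2*k) * pi / real N)) \<and>
    (\<exists>k::int. cong2pi d1 (of_int (2*k) * pi / real N)) \<and>
    (\<exists>k::int. cong2pi (b0 - b1) (of_int (2*k+1) * pi / real N))"
proof -
  have Np: "real N > 0" using N by simp
  have e00: "of_int (S False False) * pi = real N * (b1 - b0)" using XS[of False False] by simp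
  have e10: "of_int (S True False) * pi = real N * (b1 - b0 - d0)" using XS[of True False] by simp
  have e01: "of_int (S False True) * pi = real N * (b1 + d1 - b0)" using XS[of False True] by simp
  show ?thesis
  proof
    assume odd: "\<forall>z0 z1. odd (S z0 z1)"
    have "odd (- S False False)" using odd by simp
    then obtain k where k: "- S False False = 2 * k + 1" by (rule oddE)
    have c3: "cong2pi (b0 - b1) (of_int (2*k+1) * pi / real N)"
    proof -
      have "b0 - b1 = of_int (- S False False) * pi / real N" using e00 Np by (simp add: field_simps)
      then have "(b0 - b1) - of_int (2*k+1) * pi / real N = 2 * pi * of_int 0" unfolding k by simp
      then show ?thesis unfolding cong2pi_def by blast
    qed
    have "even (S False False - S True False)" using odd by simp
    then obtain k0 where k0: "S False False - S True False = 2 * k0" by blast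
    have c1: "cong2pi d0 (of_int (2*k0) * pi / real N)"
    proof -
      have "d0 = of_int (S False False - S True False) * pi / real N" using e00 e10 Np
        by (simp add: field_simps)
      then have "d0 - of_int (2*k0) * pi / real N = 2 * pi * of_int 0" unfolding k0 by simp
      then show ?thesis unfolding cong2pi_def by blast
    qed
    have "even (S False True - S False False)" using odd by simp
    then obtain k1 where k1: "S False True - S False False = 2 * k1" by blast
    have c2: "cong2pi d1 (of_int (2*k1) * pi / real N)"
    proof -
      have "d1 = of_int (S False True - S False False) * pi / real N" using e00 e01 Np
        by (simp add: field_simps)
      then have "d1 - of_int (2*k1) * pi / real N = 2 * pi * of_int 0" unfolding k1 by simp
      then show ?thesis unfolding cong2pi_def by blast
    qed
    show "(\<exists>k::int. cong2pi d0 (of_int (2*k) * pi / real N)) \<and>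
      (\<exists>k::int. cong2pi d1 (of_int (2*k) * pi / real N)) \<and>
      (\<exists>k::int. cong2pi (b0 - b1) (of_int (2*k+1) * pi / real N))" using c1 c2 c3 by blast
  next
    assume "(\<exists>k::int. cong2pi d0 (of_int (2*k) * pi / real N)) \<and>
      (\<exists>k::int. cong2pi d1 (of_int (2*k) * pi / real N)) \<and>
      (\<exists>k::int. cong2pi (b0 - b1) (of_int (2*k+1) * pi / real N))"
    then obtain k0 j0 k1 j1 k j :: int where
      h0: "d0 - of_int (2*k0) * pi / real N = 2 * pi * of_int j0" and
      h1: "d1 - of_int (2*k1) * pi / real N = 2 * pi * of_int j1" and
      h: "(b0 - b1) - of_int (2*k+1) * pi / real N = 2 * pi * of_int j"
      unfolding cong2pi_def by blast
    have H0: "real N * d0 = of_int (2*k0 + 2*int N*j0) * pi" using h0 Np by (simp add: field_simps)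
    have H1: "real N * d1 = of_int (2*k1 + 2*int N*j1) * pi" using h1 Np by (simp add: field_simps)
    have H: "real N * (b0 - b1) = of_int (2*k+1 + 2*int N*j) * pi" using h Np by (simp add: field_simps)
    show "\<forall>z0 z1. odd (S z0 z1)"
    proof (intro allI)
      fix z0 z1
      define T where "T = - (2*k+1 + 2*int N*j) + of_bool z1 * (2*k1 + 2*int N*j1) - of_bool z0 * (2*k0 + 2*int N*j0)"
      have "of_int (S z0 z1) * pi = - (real N * (b0 - b1)) + of_bool z1 * (real N * d1) - of_bool z0 * (real N * d0)"
        using XS[of z0 z1] by (simp add: algebra_simps)
      also have "\<dots> = of_int T * pi" unfolding H H0 H1 T_def by (simp add: algebra_simps)
      finally have "S z0 z1 = T" by simp
      moreover have "odd T" unfolding T_def by (cases z0; cases z1) auto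
      ultimately show "odd (S z0 z1)" by simp
    qed
  qed
qed

theorem lemma19:
  fixes lam :: real and N :: nat and A B :: "nat \<Rightarrow> real" and C0 C1 :: real
  assumes "N_regular lam N A B C0 C1"
  shows "paradox (Bstate lam) (A ` {..<N}) (B ` {..<N}) {C0, C1} \<longleftrightarrow>
           (\<exists>k::int. cong2pi (delta lam C0) (of_int (2*k) * pi / real N)) \<and>
           (\<exists>k::int. cong2pi (delta lam C1) (of_int (2*k) * pi / real N)) \<and>
           (\<exists>k::int. cong2pi (beta lam C0 - beta lam C1) (of_int (2*k+1) * pi / real N))"
proof -
  define S where "S z0 z1 = (\<Sum>j<N. mm lam N A B C0 C1 0 z0 j) - (\<Sum>j<N. mm lam N A B C0 C1 1 z1 j)" for z0 z1
  have P: "paradox (Bstate lam) (A ` {..<N}) (B ` {..<N}) {C0, C1} \<longleftrightarrow> (\<forall>z0 z1. odd (S z0 z1))"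
    using nonparadox_even[OF assms] even_nonparadox[OF assms] unfolding S_def by blast
  have bt0: "bt lam C0 C1 0 z = beta lam C0 + of_bool z * delta lam C0" for z
    by (cases z) (simp_all add: bt_def Cidx_def outc_def delta_def)
  have bt1: "bt lam C0 C1 1 z = beta lam C1 + of_bool z * delta lam C1" for z
    by (cases z) (simp_all add: bt_def Cidx_def outc_def delta_def)
  have XS: "of_int (S z0 z1) * pi = real N * ((beta lam C1 + of_bool z1 * delta lam C1) - (beta lam C0 + of_bool z0 * delta lam C0))" for z0 z1
    using S_eq[OF assms, of z0 z1] unfolding S_def bt0 bt1 .
  show ?thesis unfolding P by (rule arith_final[OF reg_N[OF assms] XS])
qed



end
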